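(* The ordinal space $\omega_1+1$ (with the order topology) is not self-selective; that is, there is a lower semicontinuous map $\varphi$ from $\omega_1+1$ to the nonempty closed subsets of $\omega_1+1$ that has no continuous selection.
   Context: For spaces $Y$, $X$, a map $\varphi:Y\to\mathcal P(X)\setminus\{\emptyset\}$ is lower semicontinuous if $\{y:\varphi(y)\cap U\neq\emptyset\}$ is open in $Y$ for every open $U\subseteq X$; a selection is a map $f:Y\to X$ with $f(y)\in\varphi(y)$ for all $y$. A space $X$ is self-selective if every lower semicontinuous map from $X$ to the nonempty closed subsets of $X$ has a continuous selection. *)

theory Defs
  imports "HOL-Analysis.Analysis"
begin

definition lower_semicontinuous :: "('a::topological_space \<Rightarrow> 'b::topological_space set) \<Rightarrow> bool" where
  "lower_semicontinuous \<phi> \<longleftrightarrow> (\<forall>U. open U \<longrightarrow> open {y. \<phi> y \<inter> U \<noteq> {}})"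

definition self_selective :: "('a::topological_space) itself \<Rightarrow> bool" where
  "self_selective (_::'a itself) \<longleftrightarrow>
     (\<forall>\<phi>::'a \<Rightarrow> 'a set.
        (\<forall>x. closed (\<phi> x) \<and> \<phi> x \<noteq> {}) \<and> lower_semicontinuous \<phi> \<longrightarrow>
        (\<exists>f::'a \<Rightarrow> 'a. continuous_on UNIV f \<and> (\<forall>x. f x \<in> \<phi> x)))"

end

theory Submission
  imports Defs
begin


definition Lm :: "'a::linorder \<Rightarrow> bool" where
  "Lm x \<longleftrightarrow> (\<exists>b. b < x) \<and> (\<forall>b<x. \<exists>z. b < z \<and> z < x)"

definition sL :: "'a::wellorder \<Rightarrow> 'a" where
  "sL x = (LEAST z. \<forall>l. Lm l \<and> l < x \<longrightarrow> l \<le> z)"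

definition tL :: "'a::wellorder \<Rightarrow> 'a" where
  "tL y = (LEAST l. Lm l \<and> y < l)"

definition dL :: "'a::wellorder \<Rightarrow> 'a" where
  "dL y = Max (from_nat_into {..<sL y} ` {..to_nat_on {..<tL y} y})"

definition phiL :: "'a::wellorder \<Rightarrow> 'a set" where
  "phiL x = (if Lm x then {sL x} else {z. z \<le> dL x} \<union> {x})"

lemma open_atMost_w: "open {..(x::'a::{wellorder,linorder_topology})}"
proof (cases "\<exists>z. x < z")
  case True
  define S where "S = (LEAST z. x < z)"
  have xS: "x < S" using True unfolding S_def by (metis LeastI)
  have "{..x} = {..<S}"
  proof (auto)
    fix y assume "y \<le> x" then show "y < S" using xS by simp
  next
    fix y assume "y < S" then show "y \<le> x"
      unfolding S_def by (metis not_less_Least not_le)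
  qed
  then show ?thesis by simp
next
  case False
  then have "{..x} = UNIV" by (auto simp: not_less)
  then show ?thesis by simp
qed

lemma open_Ioc_w: "open {a<..(x::'a::{wellorder,linorder_topology})}"
proof -
  have "{a<..x} = {a<..} \<inter> {..x}" by auto
  then show ?thesis using open_atMost_w[of x] open_greaterThan[of a] by (metis open_Int)
qed

lemma isolated_open: "\<not> Lm (x::'a::{wellorder,linorder_topology}) \<Longrightarrow> open {x}"
proof (cases "\<exists>b. b < x")
  case False
  then have "{x} = {..x}" by (auto simp: not_less antisym)
  then show ?thesis using open_atMost_w by metis
next
  case True
  assume "\<not> Lm x"
  with True obtain b where b: "b < x" "\<not> (\<exists>z. b < z \<and> z < x)" unfolding Lm_def by auto
  then have "{x} = {b<..x}" by (auto simp: le_less)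
  then show ?thesis using open_Ioc_w by metis
qed

lemma Lm_nbhd:
  fixes x :: "'a::{wellorder,linorder_topology}"
  assumes "Lm x" "open U" "x \<in> U"
  shows "\<exists>b<x. {b<..x} \<subseteq> U"
proof -
  obtain y where "y < x" using assms(1) unfolding Lm_def by auto
  then show ?thesis using open_left[OF assms(2,3)] by blast
qed

lemma sL_ge: "Lm l \<Longrightarrow> l < x \<Longrightarrow> l \<le> sL (x::'a::wellorder)"
proof -
  have "\<forall>l. Lm l \<and> l < x \<longrightarrow> l \<le> sL x"
    unfolding sL_def by (rule LeastI[of _ x]) auto
  then show "Lm l \<Longrightarrow> l < x \<Longrightarrow> l \<le> sL x" by blast
qed

lemma sL_le_ub: "(\<forall>l. Lm l \<and> l < x \<longrightarrow> l \<le> z) \<Longrightarrow> sL (x::'a::wellorder) \<le> z"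
  unfolding sL_def by (rule Least_le)

lemma sL_le: "sL (x::'a::wellorder) \<le> x"
  by (rule sL_le_ub) auto

lemma sL_Lm:
  fixes x :: "'a::wellorder"
  assumes "b < sL x"
  shows "Lm (sL x)"
  unfolding Lm_def
proof (intro conjI allI impI)
  show "\<exists>b. b < sL x" using assms by blast
next
  fix b' assume b': "b' < sL x"
  have "\<exists>l. Lm l \<and> l < x \<and> b' < l"
  proof (rule ccontr)
    assume "\<not> ?thesis"
    then have "\<forall>l. Lm l \<and> l < x \<longrightarrow> l \<le> b'" by (auto simp: not_less)
    then have "sL x \<le> b'" by (rule sL_le_ub)
    then show False using b' by simp
  qed
  then obtain l where l: "Lm l" "l < x" "b' < l" by blast
  have "l \<le> sL x" using sL_ge l by blast
  show "\<exists>z. b' < z \<and> z < sL x"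
  proof (cases "l = sL x")
    case True
    then show ?thesis using l(1,3) b' unfolding Lm_def by blast
  next
    case False
    then show ?thesis using \<open>l \<le> sL x\<close> l(3) by (intro exI[of _ l]) auto
  qed
qed

lemma between:
  fixes y :: "'a::wellorder"
  assumes "Lm \<mu>" "sL \<mu> < y" "y < \<mu>"
  shows "\<not> Lm y \<and> tL y = \<mu> \<and> sL y = sL \<mu>"
proof (intro conjI)
  show nL: "\<not> Lm y" using sL_ge[of y \<mu>] assms by auto
  show "tL y = \<mu>" unfolding tL_def
  proof (rule Least_equality)
    show "Lm \<mu> \<and> y < \<mu>" using assms by auto
  next
    fix l assume l: "Lm l \<and> y < l"
    show "\<mu> \<le> l"
    proof (rule ccontr)
      assume "\<not> \<mu> \<le> l"
      then have "l < \<mu>" by simp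
      then have "l \<le> sL \<mu>" using sL_ge l by blast
      then show False using l assms(2) by (meson le_less_trans less_asym)
    qed
  qed
  have "sL y \<le> sL \<mu>"
    by (rule sL_le_ub) (use sL_ge assms in \<open>meson less_trans\<close>)
  moreover have "sL \<mu> \<le> sL y"
  proof (cases "\<exists>b. b < sL \<mu>")
    case True
    then have "Lm (sL \<mu>)" using sL_Lm by blast
    then show ?thesis using sL_ge assms(2) by blast
  next
    case False
    then show ?thesis by (auto simp: not_less)
  qed
  ultimately show "sL y = sL \<mu>" by simp
qed

lemma Da:
  fixes y :: "'a::wellorder"
  assumes "\<exists>b. b < sL y"
  shows "dL y < sL y"
proof -
  have ne: "{..<sL y} \<noteq> {}" using assms by auto
  have "dL y \<in> from_nat_into {..<sL y} ` {..to_nat_on {..<tL y} y}"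
    unfolding dL_def by (rule Max_in) auto
  then show ?thesis using from_nat_into[OF ne] by auto
qed



locale W1 =
  fixes w1 :: "'a::{wellorder, linorder_topology}"
  assumes top: "\<forall>x. x \<le> w1"
    and unc: "uncountable {x. x < w1}"
    and cnt: "\<forall>x. x < w1 \<longrightarrow> countable {y. y < x}"
begin

lemma CB:
  assumes "countable X" "X \<subseteq> {x. x < w1}"
  shows "\<exists>B<w1. \<forall>x\<in>X. x < B"
proof (rule ccontr)
  assume "\<not> ?thesis"
  then have h: "\<forall>B<w1. \<exists>x\<in>X. B \<le> x" by (meson not_less)
  have "{x. x < w1} \<subseteq> (\<Union>x\<in>X. insert x {y. y < x})"
  proof
    fix B assume "B \<in> {x. x < w1}"
    then obtain x where "x \<in> X" "B \<le> x" using h by auto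
    then show "B \<in> (\<Union>x\<in>X. insert x {y. y < x})" by (auto simp: le_less)
  qed
  moreover have "countable (\<Union>x\<in>X. insert x {y. y < x})"
    using assms cnt by (intro countable_UN) auto
  ultimately show False using unc countable_subset by blast
qed

lemma w1_Lm: "Lm w1"
  unfolding Lm_def
proof (intro conjI allI impI)
  show "\<exists>b. b < w1" using unc by (metis Collect_empty_eq countable_empty)
next
  fix b assume b: "b < w1"
  show "\<exists>z. b < z \<and> z < w1"
  proof (rule ccontr)
    assume "\<not> ?thesis"
    then have "{x. x < w1} \<subseteq> insert b {y. y < b}" by (auto simp: not_less le_less)
    moreover have "countable (insert b {y. y < b})" using cnt b by auto
    ultimately show False using unc countable_subset by blast
  qed
qed

lemma ex_between: "b < w1 \<Longrightarrow> \<exists>z. b < z \<and> z < w1"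
  using w1_Lm unfolding Lm_def by blast

lemma SUPSEQ:
  assumes inc: "\<And>n. u n < u (Suc n)" and bd: "\<And>n. u n < w1"
  shows "\<exists>l. l < w1 \<and> Lm l \<and> (\<forall>n. u n < l) \<and> (\<forall>b<l. \<exists>n. b < u n)"
proof -
  obtain B where B: "B < w1" "\<forall>x\<in>range u. x < B"
    using CB[of "range u"] bd by auto
  define l where "l = (LEAST z. \<forall>n. u n < z)"
  have Pl: "\<forall>n. u n < l" unfolding l_def by (rule LeastI[of _ B]) (use B in auto)
  have lB: "l \<le> B" unfolding l_def by (rule Least_le) (use B in auto)
  have cof: "\<forall>b<l. \<exists>n. b < u n"
  proof (intro allI impI)
    fix b assume "b < l"
    then have "\<not> (\<forall>n. u n < b)" unfolding l_def by (rule not_less_Least)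
    then obtain n where "b \<le> u n" by (auto simp: not_less)
    then show "\<exists>n. b < u n" using inc[of n] by (meson le_less_trans)
  qed
  have "Lm l" unfolding Lm_def using Pl cof by blast
  then show ?thesis using Pl cof lB B by (intro exI[of _ l]) auto
qed

lemma limits_cofinal:
  assumes "b < w1"
  shows "\<exists>l. Lm l \<and> b < l \<and> l < w1"
proof -
  define nx where "nx x = (SOME z. x < z \<and> z < w1)" for x
  have nx: "x < w1 \<Longrightarrow> x < nx x \<and> nx x < w1" for x
    unfolding nx_def using ex_between by (rule someI_ex) 
  define u where "u n = (nx ^^ n) b" for n
  have ub: "u n < w1" for n
    by (induction n) (auto simp: u_def assms nx)
  have inc: "u n < u (Suc n)" for n using nx[OF ub[of n]] by (simp add: u_def)
  obtain l where "l < w1" "Lm l" "\<forall>n. u n < l" using SUPSEQ[of u, OF inc ub] by blast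
  then show ?thesis using spec[of _ 0] by (metis u_def funpow_0)
qed

lemma sL_w1: "sL w1 = w1"
proof (rule ccontr)
  assume "sL w1 \<noteq> w1"
  then have "sL w1 < w1" using sL_le[of w1] by simp
  then obtain l where "Lm l" "sL w1 < l" "l < w1" using limits_cofinal by blast
  then show False using sL_ge[of l w1] by simp
qed

lemma Db:
  fixes \<mu> \<gamma> :: 'a
  assumes mu: "Lm \<mu>" "sL \<mu> < \<mu>" and g: "\<gamma> < sL \<mu>"
  shows "\<exists>a. sL \<mu> \<le> a \<and> a < \<mu> \<and> (\<forall>y. a < y \<and> y < \<mu> \<longrightarrow> \<gamma> < dL y)"
proof -
  define c where "c = sL \<mu>"
  have Lc: "Lm c" using sL_Lm g c_def by blast
  obtain g' where g': "\<gamma> < g'" "g' < c" using Lc g c_def unfolding Lm_def by blast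
  have muw: "\<mu> < w1" using mu sL_w1 top by (metis le_less)
  have cw: "c < w1" using mu muw c_def by simp
  have cc: "countable {..<c}" using cnt cw by (simp add: lessThan_def)
  have cm: "countable {..<\<mu>}" using cnt muw by (simp add: lessThan_def)
  define k where "k = to_nat_on {..<c} g'"
  have fk: "from_nat_into {..<c} k = g'" unfolding k_def using cc g' by simp
  define F where "F = {y \<in> {..<\<mu>}. to_nat_on {..<\<mu>} y < k}"
  have injF: "inj_on (to_nat_on {..<\<mu>}) F"
    using inj_on_to_nat_on[OF cm] by (rule inj_on_subset) (auto simp: F_def)
  have "to_nat_on {..<\<mu>} ` F \<subseteq> {..<k}" by (auto simp: F_def)
  then have finF: "finite F" using injF finite_imageD finite_subset by blast
  define a where "a = Max (insert c F)"
  have ca: "c \<le> a" unfolding a_def using finF by simp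
  have "a \<in> insert c F" unfolding a_def using finF by (intro Max_in) auto
  then have am: "a < \<mu>" using mu c_def by (auto simp: F_def)
  have "\<gamma> < dL y" if y: "a < y" "y < \<mu>" for y
  proof -
    have "y \<notin> F"
    proof
      assume "y \<in> F"
      then have "y \<le> a" unfolding a_def using finF by (intro Max_ge) auto
      then show False using y by simp
    qed
    then have ky: "k \<le> to_nat_on {..<\<mu>} y" using y by (auto simp: F_def)
    have cy: "sL \<mu> < y" using ca y c_def by simp
    have bt: "\<not> Lm y \<and> tL y = \<mu> \<and> sL y = sL \<mu>" using between[OF mu(1) cy y(2)] .
    have "g' \<in> from_nat_into {..<sL y} ` {..to_nat_on {..<tL y} y}"
      using bt ky fk c_def by (auto intro!: image_eqI[of _ _ k])
    then have "g' \<le> dL y" unfolding dL_def by (intro Max_ge) auto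
    then show ?thesis using g' by simp
  qed
  then show ?thesis using ca am c_def by blast
qed

lemma lsc: "lower_semicontinuous (phiL :: 'a \<Rightarrow> 'a set)"
  unfolding lower_semicontinuous_def
proof (intro allI impI)
  fix U :: "'a set" assume U: "open U"
  show "open {y. phiL y \<inter> U \<noteq> {}}"
    unfolding open_subopen[of "{y. phiL y \<inter> U \<noteq> {}}"]
  proof
    fix x assume x: "x \<in> {y. phiL y \<inter> U \<noteq> {}}"
    show "\<exists>T. open T \<and> x \<in> T \<and> T \<subseteq> {y. phiL y \<inter> U \<noteq> {}}"
    proof (cases "Lm x")
      case False
      then show ?thesis using x isolated_open by blast
    next
      case Lx: True
      then have sU: "sL x \<in> U" using x by (auto simp: phiL_def)
      show ?thesis
      proof (cases "sL x < x")
        case lt: True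
        show ?thesis
        proof (cases "\<exists>b. b < sL x")
          case True
          then have Ls: "Lm (sL x)" using sL_Lm by blast
          obtain \<gamma> where gm: "\<gamma> < sL x" "{\<gamma><..sL x} \<subseteq> U" using Lm_nbhd[OF Ls U sU] by blast
          obtain a where a: "sL x \<le> a" "a < x" "\<forall>y. a < y \<and> y < x \<longrightarrow> \<gamma> < dL y"
            using Db[OF Lx lt gm(1)] by blast
          have "{a<..x} \<subseteq> {y. phiL y \<inter> U \<noteq> {}}"
          proof
            fix y assume y: "y \<in> {a<..x}"
            show "y \<in> {y. phiL y \<inter> U \<noteq> {}}"
            proof (cases "y = x")
              case True then show ?thesis using x by simp
            next
              case False
              then have yx: "y < x" using y by auto
              have cy: "sL x < y" using a y by auto
              have bt: "\<not> Lm y \<and> tL y = x \<and> sL y = sL x" using between[OF Lx cy yx] .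
              have "dL y < sL y" using Da True bt by metis
              moreover have "\<gamma> < dL y" using a y yx by auto
              ultimately have "dL y \<in> U" using gm bt by auto
              moreover have "dL y \<in> phiL y" using bt by (auto simp: phiL_def)
              ultimately show ?thesis by auto
            qed
          qed
          moreover have "x \<in> {a<..x}" using a by auto
          ultimately show ?thesis using open_Ioc_w by blast
        next
          case False
          have "{sL x<..x} \<subseteq> {y. phiL y \<inter> U \<noteq> {}}"
          proof
            fix y assume y: "y \<in> {sL x<..x}"
            show "y \<in> {y. phiL y \<inter> U \<noteq> {}}"
            proof (cases "y = x")
              case True then show ?thesis using x by simp
            next
              case False
              then have yx: "y < x" using y by auto
              have cy: "sL x < y" using y by auto
              have bt: "\<not> Lm y" using between[OF Lx cy yx] by blast
              have "sL x \<le> dL y" using \<open>\<not> (\<exists>b. b < sL x)\<close> by (auto simp: not_less)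
              then have "sL x \<in> phiL y" using bt by (auto simp: phiL_def)
              then show ?thesis using sU by auto
            qed
          qed
          moreover have "x \<in> {sL x<..x}" using lt by auto
          ultimately show ?thesis using open_Ioc_w by blast
        qed
      next
        case False
        then have sx: "sL x = x" using sL_le[of x] by simp
        obtain \<gamma> where gm: "\<gamma> < x" "{\<gamma><..x} \<subseteq> U" using Lm_nbhd[OF Lx U] sU sx by auto
        have "\<exists>l. Lm l \<and> l < x \<and> \<gamma> < l"
        proof (rule ccontr)
          assume "\<not> ?thesis"
          then have "\<forall>l. Lm l \<and> l < x \<longrightarrow> l \<le> \<gamma>" by (auto simp: not_less)
          then have "sL x \<le> \<gamma>" by (rule sL_le_ub)
          then show False using gm sx by simp
        qed
        then obtain l where l: "Lm l" "l < x" "\<gamma> < l" by blast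
        have "{l<..x} \<subseteq> {y. phiL y \<inter> U \<noteq> {}}"
        proof
          fix y assume y: "y \<in> {l<..x}"
          show "y \<in> {y. phiL y \<inter> U \<noteq> {}}"
          proof (cases "Lm y")
            case True
            have "l \<le> sL y" using sL_ge l y by auto
            moreover have "sL y \<le> x" using sL_le[of y] y by auto
            ultimately have "sL y \<in> U" using gm l by auto
            then show ?thesis using True by (auto simp: phiL_def)
          next
            case False
            then have "y \<in> U" using gm l y by auto
            then show ?thesis using False by (auto simp: phiL_def)
          qed
        qed
        moreover have "x \<in> {l<..x}" using l by auto
        ultimately show ?thesis using open_Ioc_w by blast
      qed
    qed
  qed
qed

end


context W1
begin

lemma tL_props:
  assumes "c < w1"
  shows "Lm (tL c) \<and> c < tL c"
  unfolding tL_def by (rule LeastI[of _ w1]) (use w1_Lm assms in auto)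

lemma tL_min: "Lm l \<Longrightarrow> c < l \<Longrightarrow> tL c \<le> l"
  unfolding tL_def by (rule Least_le) auto

lemma sL_tL:
  assumes "Lm c" "c < w1"
  shows "sL (tL c) = c"
proof (rule antisym)
  show "sL (tL c) \<le> c"
  proof (rule sL_le_ub, intro allI impI)
    fix l assume l: "Lm l \<and> l < tL c"
    show "l \<le> c"
    proof (rule ccontr)
      assume "\<not> l \<le> c"
      then have "c < l" by simp
      then have "tL c \<le> l" using tL_min l by blast
      then show False using l by (meson leD)
    qed
  qed
  show "c \<le> sL (tL c)" using sL_ge assms tL_props by blast
qed

lemma no_selection:
  fixes f :: "'a \<Rightarrow> 'a"
  assumes fc: "continuous_on UNIV f" and fs: "\<forall>x. f x \<in> phiL x"
  shows False
proof -
  have F1: "Lm x \<Longrightarrow> f x = sL x" for x using fs[rule_format, of x] by (auto simp: phiL_def)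
  have F2: "\<not> Lm x \<Longrightarrow> f x \<le> dL x \<or> f x = x" for x using fs[rule_format, of x] by (auto simp: phiL_def)
  have key: "\<exists>y. c < y \<and> y < tL c \<and> f y < c" if c: "Lm c" "c < w1" for c
  proof -
    define \<mu> where "\<mu> = tL c"
    have mu: "Lm \<mu>" "c < \<mu>" using tL_props c \<mu>_def by auto
    have smu: "sL \<mu> = c" using sL_tL c \<mu>_def by simp
    have fmu: "f \<mu> = c" using F1 mu smu by simp
    have "open (f -` {..c})" using open_vimage[OF open_atMost_w fc] .
    moreover have "\<mu> \<in> f -` {..c}" using fmu by simp
    ultimately obtain b where b: "b < \<mu>" "{b<..\<mu>} \<subseteq> f -` {..c}"
      using open_left[of "f -` {..c}" \<mu> c] mu by blast
    have "max b c < \<mu>" using b mu by simp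
    then obtain y where y: "max b c < y" "y < \<mu>" using mu(1) unfolding Lm_def by blast
    have "y \<in> {b<..\<mu>}" using y by auto
    then have fy: "f y \<le> c" using b by blast
    have cy: "sL \<mu> < y" using y smu by simp
    have bt: "\<not> Lm y \<and> tL y = \<mu> \<and> sL y = sL \<mu>" using between[OF mu(1) cy y(2)] .
    have "\<exists>b. b < sL y" using bt smu c(1) unfolding Lm_def by auto
    then have "dL y < c" using Da bt smu by metis
    moreover have "f y \<noteq> y" using fy y by auto
    ultimately have "f y < c" using F2 bt by (meson le_less_trans)
    then show ?thesis using y \<mu>_def by auto
  qed
  define Y where "Y c = (SOME y. c < y \<and> y < tL c \<and> f y < c)" for c
  have Y: "Lm c \<Longrightarrow> c < w1 \<Longrightarrow> c < Y c \<and> Y c < tL c \<and> f (Y c) < c" for c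
    unfolding Y_def using key by (rule someI_ex)
  define g where "g c = f (Y c)" for c
  have stepi: "\<exists>B<w1. \<forall>c. Lm c \<and> c < w1 \<and> g c \<le> \<delta> \<longrightarrow> c < B" if dw: "\<delta> < w1" for \<delta>
  proof (rule ccontr)
    assume "\<not> ?thesis"
    then have h: "\<forall>B<w1. \<exists>c. Lm c \<and> c < w1 \<and> g c \<le> \<delta> \<and> B \<le> c" by (meson not_less)
    define P where "P c = (Lm c \<and> c < w1 \<and> g c \<le> \<delta>)" for c
    define nx where "nx x = (SOME c. P c \<and> x < c)" for x
    have nx: "x < w1 \<Longrightarrow> P (nx x) \<and> x < nx x" for x
    proof -
      assume "x < w1"
      then obtain z where "x < z" "z < w1" using ex_between by blast
      then obtain c where "P c" "z \<le> c" using h unfolding P_def by blast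
      then have "\<exists>c. P c \<and> x < c" using \<open>x < z\<close> by (meson less_le_trans)
      then show ?thesis unfolding nx_def by (rule someI_ex)
    qed
    define u where "u n = (nx ^^ Suc n) \<delta>" for n
    have Pu: "P (u n)" for n
    proof (induction n)
      case 0 then show ?case using nx dw by (simp add: u_def)
    next
      case (Suc n)
      then have "u n < w1" by (simp add: P_def)
      then show ?case using nx by (simp add: u_def)
    qed
    have inc: "u n < u (Suc n)" for n
      using nx[of "u n"] Pu[of n] by (simp add: u_def P_def)
    have ub: "u n < w1" for n using Pu[of n] by (simp add: P_def)
    have d0: "\<delta> < u 0" using nx dw by (simp add: u_def)
    obtain l where l: "l < w1" "Lm l" "\<forall>n. u n < l" "\<forall>b<l. \<exists>n. b < u n"
      using SUPSEQ[of u, OF inc ub] by blast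
    have sl: "sL l = l"
    proof (rule ccontr)
      assume "sL l \<noteq> l"
      then have "sL l < l" using sL_le[of l] by simp
      then obtain n where "sL l < u n" using l by blast
      moreover have "u n \<le> sL l" using sL_ge Pu[of n] l unfolding P_def by blast
      ultimately show False by simp
    qed
    have fl: "f l = l" using F1 l sl by simp
    have "open (f -` {\<delta><..})" using open_vimage[OF open_greaterThan fc] .
    moreover have "l \<in> f -` {\<delta><..}" using fl d0 l by (auto intro: less_trans)
    ultimately obtain a where a: "a < l" "{a<..l} \<subseteq> f -` {\<delta><..}"
      using open_left[of "f -` {\<delta><..}" l "u 0"] l by blast
    obtain n where n: "a < u n" using l a by blast
    have Yn: "u n < Y (u n) \<and> Y (u n) < tL (u n) \<and> f (Y (u n)) < u n"
      using Y Pu[of n] unfolding P_def by blast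
    have "tL (u n) \<le> l" using tL_min l by blast
    then have "Y (u n) \<in> {a<..l}" using Yn n by auto
    then have "\<delta> < g (u n)" using a by (auto simp: g_def)
    then show False using Pu[of n] unfolding P_def by (meson leD)
  qed
  define Bf where "Bf \<delta> = (SOME B. B < w1 \<and> \<delta> < B \<and> (\<forall>c. Lm c \<and> c < w1 \<and> g c \<le> \<delta> \<longrightarrow> c < B))" for \<delta>
  have Bf: "\<delta> < w1 \<Longrightarrow> Bf \<delta> < w1 \<and> \<delta> < Bf \<delta> \<and> (\<forall>c. Lm c \<and> c < w1 \<and> g c \<le> \<delta> \<longrightarrow> c < Bf \<delta>)" for \<delta>
  proof -
    assume dw: "\<delta> < w1"
    obtain B where B: "B < w1" "\<forall>c. Lm c \<and> c < w1 \<and> g c \<le> \<delta> \<longrightarrow> c < B" using stepi[OF dw] by blast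
    obtain z where z: "max B \<delta> < z" "z < w1" using ex_between B dw by (metis max_less_iff_conj)
    have "\<exists>B. B < w1 \<and> \<delta> < B \<and> (\<forall>c. Lm c \<and> c < w1 \<and> g c \<le> \<delta> \<longrightarrow> c < B)"
      using z B by (intro exI[of _ z]) (auto intro: less_trans)
    then show ?thesis unfolding Bf_def by (rule someI_ex)
  qed
  obtain v0 where v0: "v0 < w1" using w1_Lm unfolding Lm_def by blast
  define v where "v n = (Bf ^^ n) v0" for n
  have vb: "v n < w1" for n
    by (induction n) (use v0 Bf in \<open>auto simp: v_def\<close>)
  have vinc: "v n < v (Suc n)" for n using Bf[OF vb[of n]] by (simp add: v_def)
  obtain l where l: "l < w1" "Lm l" "\<forall>n. v n < l" "\<forall>b<l. \<exists>n. b < v n"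
    using SUPSEQ[of v, OF vinc vb] by blast
  have "g l < l" using Y l by (simp add: g_def)
  then obtain n where "g l < v n" using l by blast
  then have "l < Bf (v n)" using Bf[OF vb[of n]] l by auto
  then have "l < v (Suc n)" by (simp add: v_def)
  then show False using l by (meson less_asym)
qed

end

theorem mainTheorem7:
  fixes w1 :: "'a::{wellorder, linorder_topology}"
  assumes top: "\<forall>x. x \<le> w1"
    and uncountable_below_top: "uncountable {x. x < w1}"
    and countable_initial: "\<forall>x. x < w1 \<longrightarrow> countable {y. y < x}"
  shows "\<not> self_selective TYPE('a)"
proof
  interpret W1 w1 using assms by unfold_locales auto
  assume "self_selective TYPE('a)"
  moreover have cl: "closed (phiL x)" for x :: 'a
  proof -
    have "{z. z \<le> dL x} = {..dL x}" by auto
    then have "closed ({z. z \<le> dL x} \<union> {x})" by (metis closed_Un closed_atMost closed_singleton)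
    then show ?thesis by (auto simp: phiL_def)
  qed
  moreover have ne: "phiL x \<noteq> {}" for x :: 'a by (auto simp: phiL_def)
  ultimately obtain f :: "'a \<Rightarrow> 'a" where "continuous_on UNIV f" "\<forall>x. f x \<in> phiL x"
    using lsc unfolding self_selective_def by blast
  then show False using no_selection by blast
qed

end
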